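(* Let $U$ be a complete length $\mathrm{CAT}(\kappa)$ space, $\lambda\in\mathbb{R}$, $s\ge0$. Let $f_t$ and $h_t$ be two families of $\lambda$-concave functions with a common domain $\Omega\subset U\times\mathbb{R}$ (open), such that $|f_t(x)-h_t(x)|\le s$ for all $(x,t)\in\Omega$. Let $\alpha$ and $\beta$ be an $f_t$-gradient curve and an $h_t$-gradient curve, respectively, defined on a common interval $[a,b)$, and set $\ell(t)=|\alpha(t)-\beta(t)|$. Assume that for every $t\in[a,b)$ some minimizing geodesic $[\alpha(t)\beta(t)]$ lies in $\{x\in U:(x,t)\in\Omega\}$. Then at every $t$ where $\ell'(t)$ exists and $\ell(t)>0$, $\ell'(t)\le\lambda\,\ell(t)+2s/\ell(t)$, and, if $\lambda\ne0$, for all $t\in[a,b)$ $\ell(t)^2+\tfrac{2s}{\lambda}\le\bigl(\ell(a)^2+\tfrac{2s}{\lambda}\bigr)e^{2\lambda(t-a)}$. In particular, if $f_t=h_t$ (so $s=0$), then $\ell(t)\le\ell(a)\,e^{\lambda(t-a)}$ for all $t\in[a,b)$.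
   Context: A function $f$ is $\lambda$-concave if $s\mapsto f(\sigma(s))-\tfrac\lambda2 s^2$ is concave along every unit-speed geodesic $\sigma$ in its domain; a family $f_t$ is $\lambda$-concave if each $f_t$ is. For $q\in U$, $T_q$ is the tangent cone, $\uparrow_q^p\in T_q$ the unit direction of a geodesic $[qp]$, and $d_qf(\uparrow_q^p)$ the right derivative at $0$ of $f$ along the unit-speed geodesic from $q$ to $p$. Given functions $f_t$ on open sets $\mathrm{Dom}f_t$ with $\{(x,t):x\in\mathrm{Dom}f_t\}$ open, a Lipschitz curve $\alpha$ is an $f_t$-gradient curve if for every point $p$ and time $t$ for which a geodesic $[\alpha(t)\,p]$ exists, $|p-\alpha(t+\epsilon)|\le|p-\alpha(t)|-\epsilon\cdot d_{\alpha(t)}f_t(\uparrow_{\alpha(t)}^p)+o(\epsilon)$ as $\epsilon\to0^+$. *)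

theory Defs
  imports "HOL-Analysis.Analysis"
begin

definition geodesic_path :: "(real \<Rightarrow> 'a::metric_space) \<Rightarrow> 'a \<Rightarrow> 'a \<Rightarrow> bool" where
  "geodesic_path \<gamma> x y \<longleftrightarrow>
     \<gamma> 0 = x \<and> \<gamma> (dist x y) = y \<and>
     (\<forall>r\<in>{0..dist x y}. \<forall>r'\<in>{0..dist x y}. dist (\<gamma> r) (\<gamma> r') = \<bar>r - r'\<bar>)"

definition unit_geodesic_on :: "real set \<Rightarrow> (real \<Rightarrow> 'a::metric_space) \<Rightarrow> bool" where
  "unit_geodesic_on I \<sigma> \<longleftrightarrow> is_interval I \<and>
     (\<forall>r\<in>I. \<forall>r'\<in>I. dist (\<sigma> r) (\<sigma> r') = \<bar>r - r'\<bar>)"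

text \<open>Length space: the distance is the infimum of the lengths of curves
  (length = supremum over partitions of the sums of distances).\<close>
definition length_space :: "'a::metric_space itself \<Rightarrow> bool" where
  "length_space _ \<longleftrightarrow>
     (\<forall>x y::'a. \<forall>e>0. \<exists>c::real \<Rightarrow> 'a. continuous_on {0..1} c \<and> c 0 = x \<and> c 1 = y \<and>
        (\<forall>(n::nat) (t::nat \<Rightarrow> real). t 0 = 0 \<and> t n = 1 \<and> (\<forall>i<n. t i \<le> t (Suc i)) \<longrightarrow>
            (\<Sum>i<n. dist (c (t i)) (c (t (Suc i)))) \<le> dist x y + e))"

definition varpi :: "real \<Rightarrow> ereal" where
  "varpi \<kappa> = (if \<kappa> > 0 then ereal (pi / sqrt \<kappa>) else \<infinity>)"

text \<open>Point-on-side comparison in the model plane of curvature kappa: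
  for a triangle with side lengths a = |xy|, b = |xz|, c = |yz| > 0 and a point
  p on the side [yz] with |yp| = s, the model distance from the model vertex x
  to the model point p is at least d.  Expressed via the model cosine laws.\<close>
definition model_pos :: "real \<Rightarrow> real \<Rightarrow> real \<Rightarrow> real \<Rightarrow> real \<Rightarrow> real \<Rightarrow> bool" where
  "model_pos \<kappa> a b c s d \<longleftrightarrow>
     (if \<kappa> > 0 then
        (let k = sqrt \<kappa> in
          cos (k * d) \<ge> (cos (k * a) * sin (k * (c - s)) + cos (k * b) * sin (k * s)) / sin (k * c))
      else if \<kappa> = 0 then
        d\<^sup>2 \<le> ((c - s) * a\<^sup>2 + s * b\<^sup>2) / c - s * (c - s)
      else
        (let k = sqrt (- \<kappa>) in
          cosh (k * d) \<le> (cosh (k * a) * sinh (k * (c - s)) + cosh (k * b) * sinh (k * s)) / sinh (k * c)))"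

definition CAT :: "real \<Rightarrow> 'a::metric_space itself \<Rightarrow> bool" where
  "CAT \<kappa> _ \<longleftrightarrow>
     (\<forall>x y::'a. ereal (dist x y) < varpi \<kappa> \<longrightarrow> (\<exists>\<gamma>. geodesic_path \<gamma> x y)) \<and>
     (\<forall>x y z::'a. \<forall>\<gamma> s.
        ereal (dist x y + dist x z + dist y z) < 2 * varpi \<kappa> \<and>
        geodesic_path \<gamma> y z \<and> 0 < dist y z \<and> s \<in> {0..dist y z} \<longrightarrow>
        model_pos \<kappa> (dist x y) (dist x z) (dist y z) s (dist x (\<gamma> s)))"

definition lambda_concave :: "real \<Rightarrow> 'a::metric_space set \<Rightarrow> ('a \<Rightarrow> real) \<Rightarrow> bool" where
  "lambda_concave lam D f \<longleftrightarrow>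
     (\<forall>I \<sigma>. unit_geodesic_on I \<sigma> \<and> \<sigma> ` I \<subseteq> D \<longrightarrow>
        concave_on I (\<lambda>r. f (\<sigma> r) - lam / 2 * r\<^sup>2))"

definition slice :: "('a \<times> real) set \<Rightarrow> real \<Rightarrow> 'a set" where
  "slice \<Omega> t = {x. (x, t) \<in> \<Omega>}"

definition lambda_concave_family :: "real \<Rightarrow> ('a::metric_space \<times> real) set \<Rightarrow> (real \<Rightarrow> 'a \<Rightarrow> real) \<Rightarrow> bool" where
  "lambda_concave_family lam \<Omega> f \<longleftrightarrow> (\<forall>t. lambda_concave lam (slice \<Omega> t) (f t))"

text \<open>The right derivative at 0 of f along the geodesic gamma (ereal-valued
  limit of difference quotients); D is d_q f(up_q^p).\<close>
definition dir_deriv :: "('a::metric_space \<Rightarrow> real) \<Rightarrow> (real \<Rightarrow> 'a) \<Rightarrow> ereal \<Rightarrow> bool" where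
  "dir_deriv f \<gamma> D \<longleftrightarrow>
     ((\<lambda>r. ereal ((f (\<gamma> r) - f (\<gamma> 0)) / r)) \<longlongrightarrow> D) (at_right 0)"

definition gradient_curve :: "('a::metric_space \<times> real) set \<Rightarrow> (real \<Rightarrow> 'a \<Rightarrow> real) \<Rightarrow>
    (real \<Rightarrow> 'a) \<Rightarrow> real \<Rightarrow> real \<Rightarrow> bool" where
  "gradient_curve \<Omega> f \<alpha> a b \<longleftrightarrow>
     (\<exists>C. C-lipschitz_on {a..<b} \<alpha>) \<and>
     (\<forall>t\<in>{a..<b}. (\<alpha> t, t) \<in> \<Omega>) \<and>
     (\<forall>t\<in>{a..<b}. \<forall>p \<gamma> D. p \<noteq> \<alpha> t \<and> geodesic_path \<gamma> (\<alpha> t) p \<and> dir_deriv (f t) \<gamma> D \<longrightarrow>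
        (\<forall>e>0. \<forall>\<^sub>F \<epsilon> in at_right 0.
            ereal (dist p (\<alpha> (t + \<epsilon>))) \<le> ereal (dist p (\<alpha> t)) - ereal \<epsilon> * D + ereal (e * \<epsilon>)))"

end

theory Submission
  imports Defs
begin


lemma dini_mono:
  fixes \<psi> :: "real \<Rightarrow> real"
  assumes cont: "continuous_on {a..<b} \<psi>"
    and D: "\<And>t e. t \<in> {a..<b} \<Longrightarrow> e > 0 \<Longrightarrow> eventually (\<lambda>\<epsilon>. \<psi> (t+\<epsilon>) \<le> \<psi> t + e*\<epsilon>) (at_right 0)"
    and T: "T \<in> {a..<b}"
  shows "\<psi> T \<le> \<psi> a"
proof -
  have key: "\<psi> T \<le> \<psi> a + \<delta>*(T-a)" if dpos: "\<delta> > 0" for \<delta>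
  proof -
    define g where "g u = \<psi> a + \<delta>*(u-a)" for u
    define A where "A = {x \<in> {a..T}. \<forall>u\<in>{a..x}. \<psi> u \<le> g u}"
    define \<sigma> where "\<sigma> = Sup A"
    have aA: "a \<in> A" using T by (auto simp: A_def g_def)
    have bdd: "bdd_above A" by (auto simp: A_def bdd_above_def)
    have sa: "a \<le> \<sigma>" unfolding \<sigma>_def using aA bdd by (rule cSup_upper)
    have sT: "\<sigma> \<le> T" unfolding \<sigma>_def using aA by (intro cSup_least) (auto simp: A_def)
    have c1: "\<psi> u \<le> g u" if "a \<le> u" "u < \<sigma>" for u
    proof -
      obtain x where "x \<in> A" "u < x" using \<open>u < \<sigma>\<close> aA bdd unfolding \<sigma>_def
        by (metis empty_iff less_cSupE)
      thus ?thesis using that by (auto simp: A_def)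
    qed
    have c2: "\<psi> \<sigma> \<le> g \<sigma>"
    proof (rule ccontr)
      assume nt: "\<not> ?thesis"
      define \<eta> where "\<eta> = \<psi> \<sigma> - g \<sigma>"
      have eta: "\<eta> > 0" using nt by (simp add: \<eta>_def)
      have sab: "\<sigma> \<in> {a..<b}" using sa sT T by auto
      have "a < \<sigma>"
      proof (rule ccontr)
        assume "\<not> a < \<sigma>" hence "\<sigma> = a" using sa by simp
        thus False using eta by (simp add: \<eta>_def g_def)
      qed
      obtain d where d: "d > 0" "\<And>x'. x' \<in> {a..<b} \<Longrightarrow> dist x' \<sigma> < d \<Longrightarrow> dist (\<psi> x') (\<psi> \<sigma>) < \<eta>/2"
        using cont sab eta unfolding continuous_on_iff by (metis half_gt_zero)
      define r where "r = min (min d (\<eta>/(2*\<delta>))) (\<sigma> - a) / 2"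
      have r: "r > 0" "r < d" "r < \<eta>/(2*\<delta>)" "r < \<sigma> - a"
      proof -
        have p: "min (min d (\<eta>/(2*\<delta>))) (\<sigma> - a) > 0" using d eta dpos \<open>a < \<sigma>\<close> by auto
        have "min (min d (\<eta>/(2*\<delta>))) (\<sigma> - a) \<le> d" "min (min d (\<eta>/(2*\<delta>))) (\<sigma> - a) \<le> \<eta>/(2*\<delta>)"
             "min (min d (\<eta>/(2*\<delta>))) (\<sigma> - a) \<le> \<sigma> - a" by auto
        with p show "r > 0" "r < d" "r < \<eta>/(2*\<delta>)" "r < \<sigma> - a" unfolding r_def by linarith+
      qed
      define u where "u = \<sigma> - r"
      have u1: "u \<in> {a..<b}" "a \<le> u" "u < \<sigma>" using r sab by (auto simp: u_def)
      have "dist (\<psi> u) (\<psi> \<sigma>) < \<eta>/2" using d(2)[OF u1(1)] r by (simp add: u_def dist_real_def)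
      hence "\<psi> u > \<psi> \<sigma> - \<eta>/2" unfolding dist_real_def by linarith
      moreover have "\<delta> * r < \<eta>/2" using r(3) dpos by (simp add: field_simps)
      moreover have "g u = g \<sigma> - \<delta>*r" by (simp add: g_def u_def algebra_simps)
      ultimately have "\<psi> u > g u" using dpos r(1) eta unfolding \<eta>_def using mult_pos_pos[OF dpos r(1)] by argo
      thus False using c1 u1 by force
    qed
    have c3: "\<sigma> = T"
    proof (rule ccontr)
      assume "\<sigma> \<noteq> T" hence sT': "\<sigma> < T" using sT by simp
      have sab: "\<sigma> \<in> {a..<b}" using sa sT T by auto
      obtain c where c: "c > 0" "\<And>y. y > 0 \<Longrightarrow> y < c \<Longrightarrow> \<psi> (\<sigma>+y) \<le> \<psi> \<sigma> + \<delta>*y"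
        using D[OF sab dpos] unfolding eventually_at_right_field by auto
      define y0 where "y0 = min (c/2) (T - \<sigma>)"
      have y0: "y0 > 0" "y0 < c" "\<sigma> + y0 \<le> T" using c sT' by (auto simp: y0_def)
      have "\<sigma> + y0 \<in> A" unfolding A_def
      proof (safe)
        show "\<sigma> + y0 \<in> {a..T}" using y0 sa by auto
      next
        fix u assume u: "u \<in> {a..\<sigma>+y0}"
        show "\<psi> u \<le> g u"
        proof (cases "u < \<sigma>")
          case True thus ?thesis using c1 u by auto
        next
          case False
          show ?thesis
          proof (cases "u = \<sigma>")
            case True thus ?thesis using c2 by simp
          next
            case False
            hence "u - \<sigma> > 0" "u - \<sigma> < c" using \<open>\<not> u < \<sigma>\<close> u y0 by auto
            from c(2)[OF this] have "\<psi> u \<le> \<psi> \<sigma> + \<delta>*(u-\<sigma>)" by simp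
            thus ?thesis using c2 by (simp add: g_def algebra_simps)
          qed
        qed
      qed
      hence "\<sigma> + y0 \<le> \<sigma>" unfolding \<sigma>_def using bdd by (rule cSup_upper)
      thus False using y0 by simp
    qed
    show ?thesis using c2 c3 by (simp add: g_def)
  qed
  show ?thesis
  proof (cases "T = a")
    case True thus ?thesis by simp
  next
    case False
    hence Ta: "T > a" using T by simp
    show ?thesis
    proof (rule ccontr)
      assume nt: "\<not> ?thesis"
      define \<delta> where "\<delta> = (\<psi> T - \<psi> a)/(2*(T-a))"
      have "\<delta> > 0" using nt Ta by (simp add: \<delta>_def)
      have e: "\<delta>*(T-a) = (\<psi> T - \<psi> a)/2" using Ta by (simp add: \<delta>_def field_simps)
      from key[OF \<open>\<delta> > 0\<close>] have "\<psi> T \<le> \<psi> a + (\<psi> T - \<psi> a)/2" using e by simp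
      thus False using nt by (simp add: field_simps)
    qed
  qed
qed



lemma concave_quot_mono:
  fixes g :: "real \<Rightarrow> real"
  assumes conc: "concave_on {0..L} g" and r: "0 < r" "r \<le> r'" "r' \<le> L"
  shows "(g r' - g 0)/r' \<le> (g r - g 0)/r"
proof -
  define t where "t = r/r'"
  have t: "0 \<le> t" "t \<le> 1" using r by (auto simp: t_def)
  have "g ((1 - t) *\<^sub>R 0 + t *\<^sub>R r') \<ge> (1 - t) * g 0 + t * g r'"
    using concave_onD[OF conc t, of 0 r'] r by auto
  moreover have "(1 - t) *\<^sub>R 0 + t *\<^sub>R r' = r" using r by (simp add: t_def)
  ultimately have "g r - g 0 \<ge> t * (g r' - g 0)" by (simp add: algebra_simps)
  hence "(g r - g 0)/r \<ge> t * (g r' - g 0)/r" using r by (simp add: divide_right_mono)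
  also have "t * (g r' - g 0)/r = (g r' - g 0)/r'" using r by (simp add: t_def)
  finally show ?thesis .
qed

lemma concave_dd:
  fixes g :: "real \<Rightarrow> real"
  assumes conc: "concave_on {0..L} g" and L: "L > 0"
  defines "S \<equiv> (SUP r\<in>{0<..L}. ereal ((g r - g 0)/r))"
  shows "((\<lambda>r. ereal ((g r - g 0)/r + c*r)) \<longlongrightarrow> S) (at_right 0)"
    and "ereal ((g L - g 0)/L) \<le> S"
proof -
  define q where "q r = (g r - g 0)/r" for r
  have mono: "q r' \<le> q r" if "0 < r" "r \<le> r'" "r' \<le> L" for r r'
    using concave_quot_mono[OF conc that] by (simp add: q_def)
  have up: "ereal (q r) \<le> S" if "r \<in> {0<..L}" for r
    unfolding S_def q_def using that by (rule SUP_upper)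
  show "ereal ((g L - g 0)/L) \<le> S" using up[of L] L by (simp add: q_def)
  show "((\<lambda>r. ereal ((g r - g 0)/r + c*r)) \<longlongrightarrow> S) (at_right 0)"
  proof (rule order_tendstoI)
    fix a assume "a < S"
    then obtain r0 where r0: "r0 \<in> {0<..L}" "a < ereal (q r0)"
      unfolding S_def q_def by (auto simp: less_SUP_iff)
    show "eventually (\<lambda>r. a < ereal ((g r - g 0)/r + c*r)) (at_right 0)"
    proof (cases a)
      case (real a')
      define \<eta> where "\<eta> = q r0 - a'"
      have eta: "\<eta> > 0" using r0 real by (simp add: \<eta>_def)
      show ?thesis unfolding eventually_at_right_field
      proof (intro exI[of _ "min r0 (\<eta>/(\<bar>c\<bar>+1))"] conjI allI impI)
        show "0 < min r0 (\<eta>/(\<bar>c\<bar>+1))" using r0 eta by auto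
        fix r assume r: "0 < r" "r < min r0 (\<eta>/(\<bar>c\<bar>+1))"
        have "q r0 \<le> q r" using mono[of r r0] r r0 by auto
        have "(\<bar>c\<bar>+1) * r < \<eta>" using r by (simp add: field_simps)
        hence "\<bar>c\<bar> * r < \<eta>" using r by (simp add: algebra_simps)
        moreover have "- (\<bar>c\<bar> * r) \<le> c * r" using r abs_ge_minus_self[of c] mult_right_mono[of "-c" "\<bar>c\<bar>" r] by linarith
        ultimately have "a' < q r + c * r" using \<open>q r0 \<le> q r\<close> by (simp add: \<eta>_def)
        thus "a < ereal ((g r - g 0)/r + c*r)" using real by (simp add: q_def)
      qed
    next
      case PInf thus ?thesis using r0 by simp
    next
      case MInf thus ?thesis by simp
    qed
  next
    fix a assume aS: "S < a"
    show "eventually (\<lambda>r. ereal ((g r - g 0)/r + c*r) < a) (at_right 0)"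
    proof (cases a)
      case (real a')
      have "S \<noteq> \<infinity>" using aS real by auto
      moreover have "S \<noteq> -\<infinity>" using up[of L] L by auto
      ultimately obtain S' where S': "S = ereal S'" by (cases S) auto
      have Sa: "S' < a'" using aS real S' by simp
      define \<eta> where "\<eta> = a' - S'"
      have eta: "\<eta> > 0" using Sa by (simp add: \<eta>_def)
      show ?thesis unfolding eventually_at_right_field
      proof (intro exI[of _ "min L (\<eta>/(\<bar>c\<bar>+1))"] conjI allI impI)
        show "0 < min L (\<eta>/(\<bar>c\<bar>+1))" using L eta by auto
        fix r assume r: "0 < r" "r < min L (\<eta>/(\<bar>c\<bar>+1))"
        have "q r \<le> S'" using up[of r] r S' by auto
        have "(\<bar>c\<bar>+1) * r < \<eta>" using r by (simp add: field_simps)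
        hence "\<bar>c\<bar> * r < \<eta>" using r by (simp add: algebra_simps)
        moreover have "c * r \<le> \<bar>c\<bar> * r" using r abs_ge_self[of c] mult_right_mono[of c "\<bar>c\<bar>" r] by linarith
        ultimately have "q r + c * r < a'" using \<open>q r \<le> S'\<close> by (simp add: \<eta>_def)
        thus "ereal ((g r - g 0)/r + c*r) < a" using real by (simp add: q_def)
      qed
    next
      case PInf thus ?thesis by simp
    next
      case MInf thus ?thesis using aS by simp
    qed
  qed
qed



lemma grad_bound:
  fixes F :: "real \<Rightarrow> 'u::metric_space \<Rightarrow> real" and c :: "real \<Rightarrow> 'u"
  assumes grad: "gradient_curve \<Omega> F c a b" and t: "t \<in> {a..<b}"
   and gp: "geodesic_path \<gamma> (c t) p" and L: "L = dist (c t) p" "L > 0"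
   and conc: "concave_on {0..L} (\<lambda>r. F t (\<gamma> r) - lam/2 * r\<^sup>2)"
   and m: "0 < \<rho>" "\<rho> \<le> L"
  shows "\<exists>D. D \<ge> (F t p - F t (c t))/L - lam/2 * L \<and>
     (\<forall>e>0. eventually (\<lambda>\<epsilon>. dist (\<gamma> \<rho>) (c (t+\<epsilon>)) \<le> \<rho> - \<epsilon>*D + e*\<epsilon>) (at_right 0))"
proof -
  define g where "g r = F t (\<gamma> r) - lam/2 * r\<^sup>2" for r
  define S where "S = (SUP r\<in>{0<..L}. ereal ((g r - g 0)/r))"
  have g0: "\<gamma> 0 = c t" "\<gamma> L = p" using gp L by (auto simp: geodesic_path_def)
  have iso: "\<And>r r'. r\<in>{0..L} \<Longrightarrow> r'\<in>{0..L} \<Longrightarrow> dist (\<gamma> r) (\<gamma> r') = \<bar>r - r'\<bar>"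
    using gp L by (auto simp: geodesic_path_def)
  have conc': "concave_on {0..L} g" using conc by (simp add: g_def[abs_def])
  have lim: "((\<lambda>r. ereal ((g r - g 0)/r + lam/2*r)) \<longlongrightarrow> S) (at_right 0)"
    unfolding S_def by (rule concave_dd(1)[OF conc' L(2)])
  have SL: "ereal ((g L - g 0)/L) \<le> S" unfolding S_def by (rule concave_dd(2)[OF conc' L(2)])
  have eq: "(F t (\<gamma> r) - F t (\<gamma> 0))/r = (g r - g 0)/r + lam/2*r" if "r > 0" for r
    using that by (simp add: g_def field_simps power2_eq_square)
  have dd: "dir_deriv (F t) \<gamma> S"
    unfolding dir_deriv_def
    apply (rule Lim_transform_eventually[OF lim])
    unfolding eventually_at_right_field by (intro exI[of _ 1]) (auto simp: eq)
  have drho: "dist (c t) (\<gamma> \<rho>) = \<rho>" using iso[of 0 \<rho>] m g0 by auto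
  have gp2: "geodesic_path \<gamma> (c t) (\<gamma> \<rho>)"
    unfolding geodesic_path_def drho using g0 iso m by auto
  have ne: "\<gamma> \<rho> \<noteq> c t" using drho m by auto
  have G: "\<forall>e>0. \<forall>\<^sub>F \<epsilon> in at_right 0.
      ereal (dist (\<gamma> \<rho>) (c (t + \<epsilon>))) \<le> ereal (dist (\<gamma> \<rho>) (c t)) - ereal \<epsilon> * S + ereal (e * \<epsilon>)"
    using grad t ne gp2 dd unfolding gradient_curve_def by blast
  have "S \<noteq> \<infinity>"
  proof
    assume Sinf: "S = \<infinity>"
    have "\<forall>\<^sub>F \<epsilon> in at_right 0. ereal (dist (\<gamma> \<rho>) (c (t + \<epsilon>))) \<le> ereal (dist (\<gamma> \<rho>) (c t)) - ereal \<epsilon> * S + ereal (1 * \<epsilon>)"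
      using G[rule_format, of 1] by simp
    moreover have "\<forall>\<^sub>F \<epsilon> in at_right (0::real). \<epsilon> > 0" by (simp add: eventually_at_right_less)
    ultimately have "\<forall>\<^sub>F \<epsilon> in at_right (0::real). False"
      by eventually_elim (simp add: Sinf)
    thus False by simp
  qed
  moreover have "S \<noteq> -\<infinity>" using SL by auto
  ultimately obtain D where D: "S = ereal D" by (cases S) auto
  show ?thesis
  proof (intro exI[of _ D] conjI allI impI)
    have "(g L - g 0)/L \<le> D" using SL D by simp
    moreover have "(g L - g 0)/L = (F t p - F t (c t))/L - lam/2 * L"
      using L g0 by (simp add: g_def field_simps power2_eq_square)
    ultimately show "(F t p - F t (c t))/L - lam/2 * L \<le> D" by simp
  next
    fix e :: real assume "e > 0"
    with G have "\<forall>\<^sub>F \<epsilon> in at_right 0.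
      ereal (dist (\<gamma> \<rho>) (c (t + \<epsilon>))) \<le> ereal (dist (\<gamma> \<rho>) (c t)) - ereal \<epsilon> * S + ereal (e * \<epsilon>)" by blast
    thus "\<forall>\<^sub>F \<epsilon> in at_right 0. dist (\<gamma> \<rho>) (c (t+\<epsilon>)) \<le> \<rho> - \<epsilon>*D + e*\<epsilon>"
      by eventually_elim (simp add: D drho dist_commute[of "\<gamma> \<rho>" "c t"])
  qed
qed



lemma sq_step:
  fixes d :: "real \<Rightarrow> real"
  assumes nonneg: "\<And>x. 0 \<le> d x" and pos: "d t > 0"
    and K: "K \<le> lam * d t + 2 * s / (d t)"
    and ev: "\<And>e. e>0 \<Longrightarrow> eventually (\<lambda>\<epsilon>. d(t+\<epsilon>) \<le> d t + \<epsilon>*K + e*\<epsilon>) (at_right 0)"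
    and e: "e > 0"
  shows "eventually (\<lambda>\<epsilon>. (d(t+\<epsilon>))\<^sup>2 \<le> (d t)\<^sup>2 + \<epsilon>*(2*lam*(d t)\<^sup>2 + 4 * s) + e*\<epsilon>) (at_right 0)"
proof -
  define l where "l = d t"
  define e1 where "e1 = e/(4*l)"
  have e1: "e1 > 0" using e pos by (simp add: e1_def l_def)
  obtain \<delta>1 where d1: "\<delta>1 > 0" "\<And>\<epsilon>. 0 < \<epsilon> \<Longrightarrow> \<epsilon> < \<delta>1 \<Longrightarrow> d(t+\<epsilon>) \<le> l + \<epsilon>*K + e1*\<epsilon>"
    using ev[OF e1] unfolding eventually_at_right_field l_def by auto
  define M where "M = (K+e1)\<^sup>2 + 1"
  have M: "M > 0" by (simp add: M_def add_nonneg_pos)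
  show ?thesis unfolding eventually_at_right_field
  proof (intro exI[of _ "min \<delta>1 (e/(2*M))"] conjI allI impI)
    show "0 < min \<delta>1 (e/(2*M))" using d1 e M by simp
    fix \<epsilon> :: real assume "0 < \<epsilon>" "\<epsilon> < min \<delta>1 (e/(2*M))"
    hence ep: "0 < \<epsilon>" "\<epsilon> < \<delta>1" "\<epsilon> < e/(2*M)" by auto
    define R where "R = l + \<epsilon>*(K+e1)"
    have "d(t+\<epsilon>) \<le> R" using d1(2)[OF ep(1,2)] by (simp add: R_def algebra_simps)
    hence "(d(t+\<epsilon>))\<^sup>2 \<le> R\<^sup>2" using nonneg by (simp add: power_mono)
    also have "R\<^sup>2 = l\<^sup>2 + \<epsilon>*(2*l*K) + \<epsilon>*(2*l*e1) + \<epsilon>*(\<epsilon>*(K+e1)\<^sup>2)"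
      by (simp add: R_def power2_eq_square algebra_simps)
    also have "2*l*K \<le> 2*lam*l\<^sup>2 + 4 * s"
    proof -
      have "2*l*K \<le> 2*l*(lam * l + 2 * s / l)" using K pos by (simp add: l_def)
      also have "\<dots> = 2*lam*l\<^sup>2 + 4 * s" using pos by (simp add: l_def field_simps power2_eq_square)
      finally show ?thesis .
    qed
    hence "\<epsilon>*(2*l*K) \<le> \<epsilon>*(2*lam*l\<^sup>2 + 4 * s)" using ep by (simp add: mult_left_mono)
    also have "2*l*e1 = e/2" using pos by (simp add: e1_def l_def)
    also have "\<epsilon>*(K+e1)\<^sup>2 \<le> e/2"
    proof -
      have "\<epsilon>*(2*M) < e" using ep M by (simp add: field_simps)
      moreover have "\<epsilon>*(K+e1)\<^sup>2 \<le> \<epsilon>*M" using ep by (simp add: M_def)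
      ultimately show ?thesis by simp
    qed
    hence "\<epsilon>*(\<epsilon>*(K+e1)\<^sup>2) \<le> \<epsilon>*(e/2)" using ep by (simp add: mult_left_mono)
    finally show "(d(t+\<epsilon>))\<^sup>2 \<le> (d t)\<^sup>2 + \<epsilon>*(2*lam*(d t)\<^sup>2 + 4 * s) + e*\<epsilon>"
      by (simp add: l_def algebra_simps)
  qed
qed

lemma sq_step0:
  fixes d :: "real \<Rightarrow> real"
  assumes nonneg: "\<And>x. 0 \<le> d x" and z: "d t = 0"
    and bound: "\<And>\<epsilon>. 0<\<epsilon> \<Longrightarrow> \<epsilon> < r \<Longrightarrow> d(t+\<epsilon>) \<le> L*\<epsilon>" and r: "r > 0"
    and s: "s \<ge> 0" and e: "e > 0"
  shows "eventually (\<lambda>\<epsilon>. (d(t+\<epsilon>))\<^sup>2 \<le> (d t)\<^sup>2 + \<epsilon>*(2*lam*(d t)\<^sup>2 + 4 * s) + e*\<epsilon>) (at_right 0)"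
  unfolding eventually_at_right_field
proof (intro exI[of _ "min r (e/(L\<^sup>2+1))"] conjI allI impI)
  have "L\<^sup>2 + 1 > 0" by (simp add: add_nonneg_pos)
  thus "0 < min r (e/(L\<^sup>2+1))" using r e by simp
  fix \<epsilon> :: real assume "0 < \<epsilon>" "\<epsilon> < min r (e/(L\<^sup>2+1))"
  hence ep: "0 < \<epsilon>" "\<epsilon> < r" "\<epsilon> < e/(L\<^sup>2+1)" by auto
  have "(d(t+\<epsilon>))\<^sup>2 \<le> (L*\<epsilon>)\<^sup>2" using bound[OF ep(1,2)] nonneg by (simp add: power_mono)
  also have "(L*\<epsilon>)\<^sup>2 = \<epsilon>*(\<epsilon>*L\<^sup>2)" by (simp add: power2_eq_square)
  also have "\<epsilon>*L\<^sup>2 \<le> e"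
  proof -
    have "\<epsilon>*(L\<^sup>2+1) < e" using ep \<open>L\<^sup>2 + 1 > 0\<close> by (simp add: field_simps)
    thus ?thesis using ep by (simp add: algebra_simps)
  qed
  hence "\<epsilon>*(\<epsilon>*L\<^sup>2) \<le> \<epsilon>*e" using ep by (simp add: mult_left_mono)
  finally show "(d(t+\<epsilon>))\<^sup>2 \<le> (d t)\<^sup>2 + \<epsilon>*(2*lam*(d t)\<^sup>2 + 4 * s) + e*\<epsilon>"
    using z s ep by (simp add: algebra_simps add_increasing2)
qed

lemma exp_step:
  fixes u :: "real \<Rightarrow> real"
  assumes ev: "\<And>e. e>0 \<Longrightarrow> eventually (\<lambda>\<epsilon>. u(t+\<epsilon>) \<le> u t + \<epsilon>*(2*lam*u t) + e*\<epsilon>) (at_right 0)"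
    and e: "e > 0"
  shows "eventually (\<lambda>\<epsilon>. u(t+\<epsilon>)*exp(-2*lam*(t+\<epsilon>-a)) \<le> u t * exp(-2*lam*(t-a)) + e*\<epsilon>) (at_right 0)"
proof -
  define q0 where "q0 = exp(-2*lam*(t-a))"
  define U where "U = u t"
  have q0: "q0 > 0" by (simp add: q0_def)
  define e1 where "e1 = e/(6*q0)"
  have e1: "e1 > 0" using e q0 by (simp add: e1_def)
  obtain \<delta>1 where d1: "\<delta>1 > 0" "\<And>\<epsilon>. 0 < \<epsilon> \<Longrightarrow> \<epsilon> < \<delta>1 \<Longrightarrow> u(t+\<epsilon>) \<le> U + \<epsilon>*(2*lam*U) + e1*\<epsilon>"
    using ev[OF e1] unfolding eventually_at_right_field U_def by auto
  define M where "M = 4*lam\<^sup>2*\<bar>U\<bar> + 1"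
  have M: "M > 0" by (simp add: M_def add_nonneg_pos)
  have lp: "2*\<bar>lam\<bar>+1 > 0" by (simp add: add_nonneg_pos)
  show ?thesis unfolding eventually_at_right_field
  proof (intro exI[of _ "min \<delta>1 (min (1/(2*\<bar>lam\<bar>+1)) (e/(2*q0*M)))"] conjI allI impI)
    show "0 < min \<delta>1 (min (1/(2*\<bar>lam\<bar>+1)) (e/(2*q0*M)))" using d1 e M q0 lp by simp
    fix \<epsilon> :: real assume "0 < \<epsilon>" "\<epsilon> < min \<delta>1 (min (1/(2*\<bar>lam\<bar>+1)) (e/(2*q0*M)))"
    hence ep: "0 < \<epsilon>" "\<epsilon> < \<delta>1" "\<epsilon> < 1/(2*\<bar>lam\<bar>+1)" "\<epsilon> < e/(2*q0*M)" by auto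
    define x where "x = -2*lam*\<epsilon>"
    have xabs: "\<bar>x\<bar> \<le> 1"
    proof -
      have "\<epsilon>*(2*\<bar>lam\<bar>+1) < 1" using ep lp by (simp add: field_simps)
      hence "2*\<bar>lam\<bar>*\<epsilon> \<le> 1" using ep by (simp add: algebra_simps)
      thus ?thesis using ep by (simp add: x_def abs_mult)
    qed
    have ex: "exp(-2*lam*(t+\<epsilon>-a)) = q0 * exp x"
    proof -
      have "-2*lam*(t+\<epsilon>-a) = -2*lam*(t-a) + x" by (simp add: x_def algebra_simps)
      thus ?thesis unfolding q0_def by (metis exp_add)
    qed
    have ve: "q0 * exp x > 0" using q0 by simp
    have "u(t+\<epsilon>) \<le> U*(1-x) + e1*\<epsilon>" using d1(2)[OF ep(1,2)] by (simp add: x_def algebra_simps)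
    hence "u(t+\<epsilon>) * (q0 * exp x) \<le> (U*(1-x) + e1*\<epsilon>) * (q0 * exp x)"
      using ve by (simp add: mult_right_mono)
    also have "\<dots> = q0 * (U*((1-x)*exp x)) + q0*e1*\<epsilon>*exp x" by (simp add: algebra_simps)
    also have "U*((1-x)*exp x) \<le> U + \<bar>U\<bar>*x\<^sup>2"
    proof (cases "U \<ge> 0")
      case True
      have "1 - x \<le> exp (-x)" using exp_ge_add_one_self[of "-x"] by simp
      hence "(1-x)*exp x \<le> exp (-x) * exp x" by (simp add: mult_right_mono)
      also have "\<dots> = 1" by (simp add: mult_exp_exp)
      finally have "U*((1-x)*exp x) \<le> U*1" using True by (rule mult_left_mono)
      moreover have "\<bar>U\<bar> * x\<^sup>2 \<ge> 0" by simp
      ultimately show ?thesis by linarith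
    next
      case False
      have "(1-x)*(1+x) \<le> (1-x)*exp x" using xabs exp_ge_add_one_self[of x]
        by (intro mult_left_mono) auto
      hence "U*((1-x)*exp x) \<le> U*((1-x)*(1+x))" using False by (simp add: mult_left_mono_neg)
      also have "\<dots> = U + \<bar>U\<bar>*x\<^sup>2" using False by (simp add: power2_eq_square algebra_simps)
      finally show ?thesis .
    qed
    hence "q0 * (U*((1-x)*exp x)) \<le> q0*(U + \<bar>U\<bar>*x\<^sup>2)" using q0 by (simp add: mult_left_mono)
    also have "exp x \<le> 3"
    proof -
      have "exp x \<le> exp 1" using xabs by simp
      thus ?thesis using exp_le by linarith
    qed
    hence "q0*e1*\<epsilon>*exp x \<le> q0*e1*\<epsilon>*3" using q0 e1 ep by (simp add: mult_left_mono)
    also have "q0*e1*\<epsilon>*3 = e*\<epsilon>/2" using q0 by (simp add: e1_def field_simps)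
    also have "q0*(U + \<bar>U\<bar>*x\<^sup>2) = q0*U + \<epsilon>*(q0*\<epsilon>*(4*lam\<^sup>2*\<bar>U\<bar>))"
      by (simp add: x_def power2_eq_square algebra_simps)
    also have "q0*\<epsilon>*(4*lam\<^sup>2*\<bar>U\<bar>) \<le> e/2"
    proof -
      have "\<epsilon>*(2*q0*M) < e" using ep M q0 by (simp add: field_simps)
      moreover have "q0*\<epsilon>*(4*lam\<^sup>2*\<bar>U\<bar>) \<le> q0*\<epsilon>*M" using q0 ep by (simp add: M_def)
      ultimately show ?thesis by (simp add: algebra_simps)
    qed
    hence "\<epsilon>*(q0*\<epsilon>*(4*lam\<^sup>2*\<bar>U\<bar>)) \<le> \<epsilon>*(e/2)" using ep by (simp add: mult_left_mono)
    finally show "u(t+\<epsilon>)*exp(-2*lam*(t+\<epsilon>-a)) \<le> u t * exp(-2*lam*(t-a)) + e*\<epsilon>"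
      unfolding ex by (simp add: U_def q0_def algebra_simps)
  qed
qed



theorem mainTheorem7:
  fixes \<kappa> lam s a b :: real
    and \<Omega> :: "('u::complete_space \<times> real) set"
    and f h :: "real \<Rightarrow> 'u \<Rightarrow> real"
    and \<alpha> \<beta> :: "real \<Rightarrow> 'u"
  defines "dl \<equiv> (\<lambda>t. dist (\<alpha> t) (\<beta> t))"
  assumes U_length: "length_space TYPE('u)"
    and U_CAT: "CAT \<kappa> TYPE('u)"
    and s_nonneg: "0 \<le> s"
    and \<Omega>_open: "open \<Omega>"
    and f_conc: "lambda_concave_family lam \<Omega> f"
    and h_conc: "lambda_concave_family lam \<Omega> h"
    and close: "\<forall>(x, t)\<in>\<Omega>. \<bar>f t x - h t x\<bar> \<le> s"
    and \<alpha>_grad: "gradient_curve \<Omega> f \<alpha> a b"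
    and \<beta>_grad: "gradient_curve \<Omega> h \<beta> a b"
    and geod: "\<forall>t\<in>{a..<b}. \<exists>\<gamma>. geodesic_path \<gamma> (\<alpha> t) (\<beta> t) \<and>
                  (\<forall>r\<in>{0..dl t}. (\<gamma> r, t) \<in> \<Omega>)"
  shows "(\<forall>t\<in>{a..<b}. \<forall>D. (dl has_real_derivative D) (at t within {a..<b}) \<and> dl t > 0 \<longrightarrow>
            D \<le> lam * dl t + 2 * s / dl t)
       \<and> (lam \<noteq> 0 \<longrightarrow> (\<forall>t\<in>{a..<b}.
            (dl t)\<^sup>2 + 2 * s / lam \<le> ((dl a)\<^sup>2 + 2 * s / lam) * exp (2 * lam * (t - a))))
       \<and> (s = 0 \<longrightarrow> (\<forall>t\<in>{a..<b}. dl t \<le> dl a * exp (lam * (t - a))))"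
proof -
  have \<alpha>\<Omega>: "\<And>t. t \<in> {a..<b} \<Longrightarrow> (\<alpha> t, t) \<in> \<Omega>" using \<alpha>_grad by (auto simp: gradient_curve_def)
  have \<beta>\<Omega>: "\<And>t. t \<in> {a..<b} \<Longrightarrow> (\<beta> t, t) \<in> \<Omega>" using \<beta>_grad by (auto simp: gradient_curve_def)
  obtain C1 where C1: "C1-lipschitz_on {a..<b} \<alpha>" using \<alpha>_grad by (auto simp: gradient_curve_def)
  obtain C2 where C2: "C2-lipschitz_on {a..<b} \<beta>" using \<beta>_grad by (auto simp: gradient_curve_def)
  have dlnn: "\<And>x. 0 \<le> dl x" by (simp add: dl_def)
  have dlcont: "continuous_on {a..<b} dl"
    unfolding dl_def using lipschitz_on_continuous_on[OF C1] lipschitz_on_continuous_on[OF C2]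
    by (intro continuous_intros)
  have stepA: "\<exists>K. K \<le> lam * dl t + 2 * s / dl t \<and>
      (\<forall>e>0. eventually (\<lambda>\<epsilon>. dl (t+\<epsilon>) \<le> dl t + \<epsilon>*K + e*\<epsilon>) (at_right 0))"
    if t: "t \<in> {a..<b}" and pos: "dl t > 0" for t
  proof -
    define l where "l = dl t"
    obtain \<gamma> where gp: "geodesic_path \<gamma> (\<alpha> t) (\<beta> t)" and g\<Omega>: "\<forall>r\<in>{0..l}. (\<gamma> r, t) \<in> \<Omega>"
      using geod t unfolding l_def by blast
    have lpos: "l > 0" using pos by (simp add: l_def)
    have ld: "l = dist (\<alpha> t) (\<beta> t)" by (simp add: l_def dl_def)
    have iso: "\<And>r r'. r\<in>{0..l} \<Longrightarrow> r'\<in>{0..l} \<Longrightarrow> dist (\<gamma> r) (\<gamma> r') = \<bar>r - r'\<bar>"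
      using gp ld by (auto simp: geodesic_path_def)
    have ge: "\<gamma> 0 = \<alpha> t" "\<gamma> l = \<beta> t" using gp ld by (auto simp: geodesic_path_def)
    define \<gamma>' where "\<gamma>' r = \<gamma> (l - r)" for r
    have iso': "\<And>r r'. r\<in>{0..l} \<Longrightarrow> r'\<in>{0..l} \<Longrightarrow> dist (\<gamma>' r) (\<gamma>' r') = \<bar>r - r'\<bar>"
      unfolding \<gamma>'_def using iso by (auto simp: abs_minus_commute)
    have ld': "l = dist (\<beta> t) (\<alpha> t)" using ld by (simp add: dist_commute)
    have gp': "geodesic_path \<gamma>' (\<beta> t) (\<alpha> t)"
      unfolding geodesic_path_def ld'[symmetric] using iso' ge by (auto simp: \<gamma>'_def)
    have ug: "unit_geodesic_on {0..l} \<gamma>" using iso by (auto simp: unit_geodesic_on_def is_interval_cc)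
    have ug': "unit_geodesic_on {0..l} \<gamma>'" using iso' by (auto simp: unit_geodesic_on_def is_interval_cc)
    have im: "\<gamma> ` {0..l} \<subseteq> slice \<Omega> t" using g\<Omega> by (auto simp: slice_def)
    have im': "\<gamma>' ` {0..l} \<subseteq> slice \<Omega> t" using g\<Omega> by (auto simp: slice_def \<gamma>'_def)
    have cf: "concave_on {0..l} (\<lambda>r. f t (\<gamma> r) - lam/2 * r\<^sup>2)"
      using f_conc ug im unfolding lambda_concave_family_def lambda_concave_def by blast
    have ch: "concave_on {0..l} (\<lambda>r. h t (\<gamma>' r) - lam/2 * r\<^sup>2)"
      using h_conc ug' im' unfolding lambda_concave_family_def lambda_concave_def by blast
    have hl: "0 < l/2" "l/2 \<le> l" using lpos by auto
    obtain D1 where D1: "D1 \<ge> (f t (\<beta> t) - f t (\<alpha> t))/l - lam/2 * l"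
      "\<forall>e>0. eventually (\<lambda>\<epsilon>. dist (\<gamma> (l/2)) (\<alpha> (t+\<epsilon>)) \<le> l/2 - \<epsilon>*D1 + e*\<epsilon>) (at_right 0)"
      using grad_bound[OF \<alpha>_grad t gp ld lpos cf hl] by blast
    obtain D2 where D2: "D2 \<ge> (h t (\<alpha> t) - h t (\<beta> t))/l - lam/2 * l"
      "\<forall>e>0. eventually (\<lambda>\<epsilon>. dist (\<gamma>' (l/2)) (\<beta> (t+\<epsilon>)) \<le> l/2 - \<epsilon>*D2 + e*\<epsilon>) (at_right 0)"
      using grad_bound[OF \<beta>_grad t gp' ld' lpos ch hl] by blast
    have mid: "\<gamma>' (l/2) = \<gamma> (l/2)" by (simp add: \<gamma>'_def)
    show ?thesis
    proof (intro exI[of _ "-(D1+D2)"] conjI allI impI)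
      have ca: "\<bar>f t (\<alpha> t) - h t (\<alpha> t)\<bar> \<le> s" using close \<alpha>\<Omega>[OF t] by auto
      have cb: "\<bar>f t (\<beta> t) - h t (\<beta> t)\<bar> \<le> s" using close \<beta>\<Omega>[OF t] by auto
      have eqq: "(f t (\<beta> t) - f t (\<alpha> t))/l + (h t (\<alpha> t) - h t (\<beta> t))/l
          = ((f t (\<beta> t) - h t (\<beta> t)) - (f t (\<alpha> t) - h t (\<alpha> t)))/l" by (simp add: diff_divide_distrib add_divide_distrib)
      have "(- 2 * s)/l \<le> ((f t (\<beta> t) - h t (\<beta> t)) - (f t (\<alpha> t) - h t (\<alpha> t)))/l"
        using ca cb lpos by (intro divide_right_mono) auto
      with eqq have "D1 + D2 \<ge> (- 2 * s)/l - lam * l" using D1(1) D2(1) by linarith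
      moreover have "(- 2 * s)/l = - (2 * s / l)" by simp
      ultimately show "-(D1+D2) \<le> lam * dl t + 2 * s / dl t" unfolding l_def by linarith
    next
      fix e :: real assume e: "e > 0"
      have "eventually (\<lambda>\<epsilon>. dist (\<gamma> (l/2)) (\<alpha> (t+\<epsilon>)) \<le> l/2 - \<epsilon>*D1 + (e/2)*\<epsilon>) (at_right 0)"
        using D1(2) e half_gt_zero by blast
      moreover have "eventually (\<lambda>\<epsilon>. dist (\<gamma> (l/2)) (\<beta> (t+\<epsilon>)) \<le> l/2 - \<epsilon>*D2 + (e/2)*\<epsilon>) (at_right 0)"
        using D2(2) e half_gt_zero unfolding mid by blast
      ultimately show "eventually (\<lambda>\<epsilon>. dl (t+\<epsilon>) \<le> dl t + \<epsilon>*(-(D1+D2)) + e*\<epsilon>) (at_right 0)"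
      proof eventually_elim
        case (elim \<epsilon>)
        have "dl (t+\<epsilon>) \<le> dist (\<gamma> (l/2)) (\<alpha> (t+\<epsilon>)) + dist (\<gamma> (l/2)) (\<beta> (t+\<epsilon>))"
          unfolding dl_def by (rule dist_triangle3)
        thus ?case using elim by (simp add: l_def[symmetric] algebra_simps)
      qed
    qed
  qed
  have stepQ: "eventually (\<lambda>\<epsilon>. (dl(t+\<epsilon>))\<^sup>2 \<le> (dl t)\<^sup>2 + \<epsilon>*(2*lam*(dl t)\<^sup>2 + 4 * s) + e*\<epsilon>) (at_right 0)"
    if t: "t \<in> {a..<b}" and e: "e > 0" for t e
  proof (cases "dl t > 0")
    case True
    obtain K where K: "K \<le> lam * dl t + 2 * s / dl t"
      "\<forall>e>0. eventually (\<lambda>\<epsilon>. dl (t+\<epsilon>) \<le> dl t + \<epsilon>*K + e*\<epsilon>) (at_right 0)"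
      using stepA[OF t True] by blast
    show ?thesis by (rule sq_step[where d=dl and t=t and K=K and lam=lam and s=s, OF dlnn True K(1) _ e]) (use K(2) in blast)
  next
    case False
    hence z: "dl t = 0" using dlnn[of t] by simp
    have bnd: "dl (t+\<epsilon>) \<le> (C1+C2)*\<epsilon>" if "0 < \<epsilon>" "\<epsilon> < b - t" for \<epsilon>
    proof -
      have te: "t+\<epsilon> \<in> {a..<b}" using t that by auto
      have ab: "\<alpha> t = \<beta> t" using z by (simp add: dl_def)
      have "dl (t+\<epsilon>) \<le> dist (\<alpha> (t+\<epsilon>)) (\<alpha> t) + dist (\<beta> (t+\<epsilon>)) (\<beta> t)"
        unfolding dl_def using dist_triangle2[of "\<alpha> (t+\<epsilon>)" "\<beta> (t+\<epsilon>)" "\<beta> t"] ab by simp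
      also have "\<dots> \<le> C1 * dist (t+\<epsilon>) t + C2 * dist (t+\<epsilon>) t"
        using lipschitz_onD[OF C1 te t] lipschitz_onD[OF C2 te t] by linarith
      finally show ?thesis using that by (simp add: dist_real_def algebra_simps)
    qed
    show ?thesis by (rule sq_step0[where d=dl and t=t and r="b-t" and L="C1+C2" and s=s, OF dlnn z bnd _ s_nonneg e]) (use t in auto)
  qed
  have mono: "((dl t)\<^sup>2 + c) * exp(-2*lam*(t-a)) \<le> (dl a)\<^sup>2 + c"
    if c: "2*lam*c = 4 * s" and t: "t \<in> {a..<b}" for c t
  proof -
    have c': "c*(lam*2) = s*4" using c by (simp add: algebra_simps)
    define u where "u x = (dl x)\<^sup>2 + c" for x
    define \<psi> where "\<psi> x = u x * exp(-2*lam*(x-a))" for x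
    have ustep: "eventually (\<lambda>\<epsilon>. u(x+\<epsilon>) \<le> u x + \<epsilon>*(2*lam*u x) + e*\<epsilon>) (at_right 0)"
      if "x \<in> {a..<b}" "e > 0" for x e
      using stepQ[OF that] by eventually_elim (simp add: u_def algebra_simps c')
    have "\<psi> t \<le> \<psi> a"
    proof (rule dini_mono[OF _ _ t])
      show "continuous_on {a..<b} \<psi>" unfolding \<psi>_def u_def using dlcont
        by (intro continuous_intros)
      fix x e :: real assume "x \<in> {a..<b}" "e > 0"
      show "eventually (\<lambda>\<epsilon>. \<psi> (x+\<epsilon>) \<le> \<psi> x + e*\<epsilon>) (at_right 0)"
        unfolding \<psi>_def by (rule exp_step[OF ustep[OF \<open>x \<in> {a..<b}\<close>] \<open>e > 0\<close>])
    qed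
    thus ?thesis by (simp add: \<psi>_def u_def)
  qed
  have P1: "\<forall>t\<in>{a..<b}. \<forall>D. (dl has_real_derivative D) (at t within {a..<b}) \<and> dl t > 0 \<longrightarrow>
            D \<le> lam * dl t + 2 * s / dl t"
  proof (intro ballI allI impI, elim conjE)
    fix t D assume t: "t \<in> {a..<b}" and der: "(dl has_real_derivative D) (at t within {a..<b})"
      and pos: "dl t > 0"
    obtain K where K: "K \<le> lam * dl t + 2 * s / dl t"
      "\<forall>e>0. eventually (\<lambda>\<epsilon>. dl (t+\<epsilon>) \<le> dl t + \<epsilon>*K + e*\<epsilon>) (at_right 0)"
      using stepA[OF t pos] by blast
    have "D \<le> K"
    proof (rule ccontr)
      assume "\<not> D \<le> K"
      define \<eta> where "\<eta> = (D - K)/2"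
      have eta: "\<eta> > 0" using \<open>\<not> D \<le> K\<close> by (simp add: \<eta>_def)
      have lim: "((\<lambda>y. (dl y - dl t)/(y - t)) \<longlongrightarrow> D) (at t within {a..<b})"
        using der by (simp add: has_field_derivative_iff)
      have "eventually (\<lambda>y. dist ((dl y - dl t)/(y - t)) D < \<eta>/2) (at t within {a..<b})"
        using lim eta half_gt_zero unfolding tendsto_iff by blast
      then obtain d where d: "d > 0" "\<And>y. y \<in> {a..<b} \<Longrightarrow> y \<noteq> t \<Longrightarrow> dist y t < d \<Longrightarrow>
          dist ((dl y - dl t)/(y - t)) D < \<eta>/2"
        unfolding eventually_at by blast
      obtain d2 where d2: "d2 > 0" "\<And>\<epsilon>. 0 < \<epsilon> \<Longrightarrow> \<epsilon> < d2 \<Longrightarrow> dl (t+\<epsilon>) \<le> dl t + \<epsilon>*K + \<eta>*\<epsilon>"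
        using K(2) eta unfolding eventually_at_right_field by blast
      define \<epsilon> where "\<epsilon> = min (min d d2) (b - t) / 2"
      have ep: "0 < \<epsilon>" "\<epsilon> < d" "\<epsilon> < d2" "t + \<epsilon> < b"
      proof -
        have p: "min (min d d2) (b - t) > 0" using d d2 t by auto
        have "min (min d d2) (b - t) \<le> d" "min (min d d2) (b - t) \<le> d2" "min (min d d2) (b - t) \<le> b - t"
          by auto
        with p show "0 < \<epsilon>" "\<epsilon> < d" "\<epsilon> < d2" "t + \<epsilon> < b" unfolding \<epsilon>_def by linarith+
      qed
      have "dist ((dl (t+\<epsilon>) - dl t)/((t+\<epsilon>) - t)) D < \<eta>/2"
        using d(2)[of "t+\<epsilon>"] ep t by (auto simp: dist_real_def)
      hence q1: "(dl (t+\<epsilon>) - dl t)/\<epsilon> > D - \<eta>/2" unfolding dist_real_def by (smt (verit))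
      have "dl (t+\<epsilon>) - dl t \<le> \<epsilon>*(K + \<eta>)" using d2(2)[OF ep(1,3)] by (simp add: algebra_simps)
      hence "(dl (t+\<epsilon>) - dl t)/\<epsilon> \<le> K + \<eta>" using ep(1) by (simp add: field_simps)
      with q1 have "D - \<eta>/2 < K + \<eta>" by linarith
      hence "D < K" unfolding \<eta>_def by (simp add: field_simps)
      thus False using \<open>\<not> D \<le> K\<close> by simp
    qed
    thus "D \<le> lam * dl t + 2 * s / dl t" using K(1) by linarith
  qed
  have P2: "lam \<noteq> 0 \<longrightarrow> (\<forall>t\<in>{a..<b}.
            (dl t)\<^sup>2 + 2 * s / lam \<le> ((dl a)\<^sup>2 + 2 * s / lam) * exp (2 * lam * (t - a)))"
  proof (intro impI ballI)
    fix t assume l: "lam \<noteq> 0" and t: "t \<in> {a..<b}"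
    have c: "2*lam*(2 * s / lam) = 4 * s" using l by simp
    have ee: "exp (-2*lam*(t-a)) * exp (2*lam*(t-a)) = 1" using exp_minus_inverse[of "2*lam*(t-a)"] by (simp add: mult.commute)
    have m: "((dl t)\<^sup>2 + 2 * s / lam) * exp(-2*lam*(t-a)) \<le> (dl a)\<^sup>2 + 2 * s / lam"
      by (rule mono[OF c t])
    have "((dl t)\<^sup>2 + 2 * s / lam) = (((dl t)\<^sup>2 + 2 * s / lam) * exp(-2*lam*(t-a))) * exp (2 * lam * (t - a))"
      by (metis ee mult.assoc mult.right_neutral)
    also have "\<dots> \<le> ((dl a)\<^sup>2 + 2 * s / lam) * exp (2 * lam * (t - a))"
      using m by (simp add: mult_right_mono)
    finally show "(dl t)\<^sup>2 + 2 * s / lam \<le> ((dl a)\<^sup>2 + 2 * s / lam) * exp (2 * lam * (t - a))" .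
  qed
  have P3: "s = 0 \<longrightarrow> (\<forall>t\<in>{a..<b}. dl t \<le> dl a * exp (lam * (t - a)))"
  proof (intro impI ballI)
    fix t assume s0: "s = 0" and t: "t \<in> {a..<b}"
    have ee: "exp (-2*lam*(t-a)) * exp (2*lam*(t-a)) = 1" using exp_minus_inverse[of "2*lam*(t-a)"] by (simp add: mult.commute)
    have m: "((dl t)\<^sup>2 + 0) * exp(-2*lam*(t-a)) \<le> (dl a)\<^sup>2 + 0"
      by (rule mono[OF _ t]) (simp add: s0)
    have "(dl t)\<^sup>2 = ((dl t)\<^sup>2 * exp(-2*lam*(t-a))) * exp (2 * lam * (t - a))"
      by (metis ee mult.assoc mult.right_neutral)
    also have "\<dots> \<le> (dl a)\<^sup>2 * exp (2 * lam * (t - a))"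
      using m by (simp add: mult_right_mono)
    also have "\<dots> = (dl a * exp (lam * (t - a)))\<^sup>2"
      by (simp add: power_mult_distrib exp_double[symmetric] power2_eq_square mult_exp_exp algebra_simps)
    finally show "dl t \<le> dl a * exp (lam * (t - a))"
      by (rule power2_le_imp_le) (simp add: dlnn)
  qed
  show ?thesis using P1 P2 P3 by blast
qed


end
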